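(* Let $p$ be a prime and $G$ a finite metacyclic $p$-group. Then every non-abelian subgroup $H$ of $G$ satisfies $C_G(H)\le H$.
   Context: A group is metacyclic if it has a cyclic normal subgroup with cyclic quotient. $C_G(H)$ denotes the centralizer of $H$ in $G$. *)

theory Defs
  imports "HOL-Algebra.Algebra"
begin

definition centralizer :: "('a, 'b) monoid_scheme \<Rightarrow> 'a set \<Rightarrow> 'a set" where
  "centralizer G H = {g \<in> carrier G. \<forall>h \<in> H. g \<otimes>\<^bsub>G\<^esub> h = h \<otimes>\<^bsub>G\<^esub> g}"

definition metacyclic :: "('a, 'b) monoid_scheme \<Rightarrow> bool" where
  "metacyclic G \<longleftrightarrow> (\<exists>N. N \<lhd> G \<and> cyclic_group (G\<lparr>carrier := N\<rparr>) \<and> cyclic_group (G Mod N))"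

end

theory Submission imports Defs begin

lemma int_primepow_gcd:
  fixes i :: int
  assumes "Factorial_Ring.prime p"
  shows "\<exists>a. gcd i (int (p ^ n)) = int p ^ a"
proof -
  have "gcd i (int (p^n)) dvd int p ^ n" by simp
  moreover have "Factorial_Ring.prime (int p)" using assms by simp
  ultimately obtain a where "normalize (gcd i (int (p^n))) = int p ^ a"
    using divides_primepow by blast
  thus ?thesis by auto
qed

lemma (in group) pow_in_cyclic_aux:
  fixes i j m :: int
  assumes g: "g \<in> carrier G" and gm: "g [^] m = \<one>" and d: "gcd j m dvd i"
  shows "\<exists>k::int. g [^] i = (g [^] j) [^] k"
proof -
  obtain s t where st: "s * j + t * m = gcd j m" using bezout_int by blast
  obtain q where q: "i = gcd j m * q" using d by blast
  have "i = j * (s*q) + m * (t*q)" using q st by (simp add: algebra_simps flip: st)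
  hence "g [^] i = g [^] (j * (s*q)) \<otimes> g [^] (m * (t*q))"
    using g by (simp add: int_pow_mult)
  also have "g [^] (m * (t*q)) = (g [^] m) [^] (t*q)" using g by (simp add: int_pow_pow)
  hence "g [^] (j * (s*q)) \<otimes> g [^] (m * (t*q)) = (g [^] j) [^] (s*q)"
    using g gm by (simp add: int_pow_pow)
  finally show ?thesis by blast
qed

lemma cyclic_chain:
  assumes "group K" "cyclic_group K" "Factorial_Ring.prime p" "order K = p ^ n"
    "u \<in> carrier K" "v \<in> carrier K"
  shows "(\<exists>k::int. u = v [^]\<^bsub>K\<^esub> k) \<or> (\<exists>k::int. v = u [^]\<^bsub>K\<^esub> k)"
proof -
  interpret K: group K by fact
  obtain g where g: "g \<in> carrier K" and cK: "carrier K = range (\<lambda>i::int. g [^]\<^bsub>K\<^esub> i)"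
    using assms(2) K.cyclic_group by blast
  have fin: "finite (carrier K)" using assms(3,4)
    by (metis K.order_gt_0_iff_finite prime_gt_0_nat zero_less_power)
  have gm: "g [^]\<^bsub>K\<^esub> (int (p^n)) = \<one>\<^bsub>K\<^esub>"
    using K.pow_order_eq_1[OF g] assms(4) by (metis int_pow_int)
  obtain i :: int where i: "u = g [^]\<^bsub>K\<^esub> i" using assms(5) cK by auto
  obtain j :: int where j: "v = g [^]\<^bsub>K\<^esub> j" using assms(6) cK by auto
  obtain a where a: "gcd i (int (p^n)) = int p ^ a" using int_primepow_gcd assms(3) by blast
  obtain b where b: "gcd j (int (p^n)) = int p ^ b" using int_primepow_gcd assms(3) by blast
  show ?thesis
  proof (cases "b \<le> a")
    case True
    hence "gcd j (int (p^n)) dvd gcd i (int (p^n))" using a b by (simp add: le_imp_power_dvd)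
    hence "gcd j (int (p^n)) dvd i" using dvd_trans gcd_dvd1 by blast
    thus ?thesis using K.pow_in_cyclic_aux[OF g gm] i j by blast
  next
    case False
    hence "gcd i (int (p^n)) dvd gcd j (int (p^n))" using a b by (simp add: le_imp_power_dvd)
    hence "gcd i (int (p^n)) dvd j" using dvd_trans gcd_dvd1 by blast
    thus ?thesis using K.pow_in_cyclic_aux[OF g gm] i j by blast
  qed
qed

lemma (in group) comm_inv:
  assumes "a \<in> carrier G" "h \<in> carrier G" "a \<otimes> h = h \<otimes> a"
  shows "inv a \<otimes> h = h \<otimes> inv a"
proof -
  have "inv a \<otimes> h = inv a \<otimes> (h \<otimes> (a \<otimes> inv a))" using assms by simp
  also have "\<dots> = inv a \<otimes> ((h \<otimes> a) \<otimes> inv a)" using assms(1,2) by (simp add: m_assoc)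
  also have "\<dots> = inv a \<otimes> ((a \<otimes> h) \<otimes> inv a)" using assms by simp
  also have "\<dots> = h \<otimes> inv a" using assms(1,2) by (simp add: m_assoc[symmetric])
  finally show ?thesis .
qed

lemma (in group) comm_mult:
  assumes "a \<in> carrier G" "b \<in> carrier G" "h \<in> carrier G" "a \<otimes> h = h \<otimes> a" "b \<otimes> h = h \<otimes> b"
  shows "(a \<otimes> b) \<otimes> h = h \<otimes> (a \<otimes> b)"
proof -
  have "(a \<otimes> b) \<otimes> h = a \<otimes> (b \<otimes> h)" using assms(1-3) by (simp add: m_assoc)
  also have "\<dots> = a \<otimes> (h \<otimes> b)" using assms by simp
  also have "\<dots> = (a \<otimes> h) \<otimes> b" using assms(1-3) by (simp add: m_assoc)
  also have "\<dots> = (h \<otimes> a) \<otimes> b" using assms by simp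
  also have "\<dots> = h \<otimes> (a \<otimes> b)" using assms(1-3) by (simp add: m_assoc)
  finally show ?thesis .
qed

lemma (in group) centralizer_subgroup:
  assumes "S \<subseteq> carrier G" shows "subgroup (centralizer G S) G"
proof (rule subgroupI)
  show "centralizer G S \<subseteq> carrier G" by (auto simp: centralizer_def)
  show "centralizer G S \<noteq> {}" using one_closed assms unfolding centralizer_def by force
next
  fix a assume a: "a \<in> centralizer G S"
  show "inv a \<in> centralizer G S"
    using a comm_inv assms unfolding centralizer_def by auto
next
  fix a b assume a: "a \<in> centralizer G S" and b: "b \<in> centralizer G S"
  show "a \<otimes> b \<in> centralizer G S"
    using a b comm_mult assms unfolding centralizer_def by auto
qed

lemma (in group) commuting_generate:
  assumes S: "S \<subseteq> carrier G" and c: "\<And>s t. s \<in> S \<Longrightarrow> t \<in> S \<Longrightarrow> s \<otimes> t = t \<otimes> s"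
    and h1: "h1 \<in> generate G S" and h2: "h2 \<in> generate G S"
  shows "h1 \<otimes> h2 = h2 \<otimes> h1"
proof -
  have "S \<subseteq> centralizer G S" using S c by (auto simp: centralizer_def)
  hence g1: "generate G S \<subseteq> centralizer G S"
    using generate_subgroup_incl centralizer_subgroup S generate_incl by blast
  have "S \<subseteq> centralizer G (generate G S)"
    using S g1 by (auto simp: centralizer_def)
  hence "generate G S \<subseteq> centralizer G (generate G S)"
    using generate_subgroup_incl centralizer_subgroup S generate_incl by blast
  thus ?thesis using h1 h2 by (auto simp: centralizer_def)
qed

lemma finite_total_max:
  assumes "finite A" "A \<noteq> {}"
    and tr: "\<forall>x\<in>A. \<forall>y\<in>A. \<forall>z\<in>A. R x y \<longrightarrow> R y z \<longrightarrow> R x z"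
    and tot: "\<forall>x\<in>A. \<forall>y\<in>A. R x y \<or> R y x"
  shows "\<exists>b\<in>A. \<forall>h\<in>A. R h b"
  using assms
proof (induction A rule: finite_ne_induct)
  case (singleton x)
  then show ?case by blast
next
  case (insert a F)
  have trF: "\<forall>x\<in>F. \<forall>y\<in>F. \<forall>z\<in>F. R x y \<longrightarrow> R y z \<longrightarrow> R x z" using insert.prems(1) by blast
  have totF: "\<forall>x\<in>F. \<forall>y\<in>F. R x y \<or> R y x" using insert.prems(2) by blast
  obtain v where v: "v \<in> F" "\<forall>h\<in>F. R h v" using insert.IH[OF trF totF] by blast
  show ?case
  proof (cases "R a v")
    case True thus ?thesis using v by blast
  next
    case False
    hence va: "R v a" using insert.prems(2) v(1) by blast
    have "\<forall>h\<in>F. R h a" using v va insert.prems(1) by blast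
    moreover have "R a a" using insert.prems(2) by blast
    ultimately show ?thesis by blast
  qed
qed


lemma (in group) main_lemma:
  assumes pr: "Factorial_Ring.prime p"
    and fin: "finite (carrier G)"
    and ord: "\<exists>n. order G = p ^ n"
    and mc: "metacyclic G"
    and sH: "subgroup H G"
    and nc: "\<not> comm_group (G\<lparr>carrier := H\<rparr>)"
  shows "centralizer G H \<subseteq> H"
proof
  fix x assume xC: "x \<in> centralizer G H"
  have pr: "Factorial_Ring.prime p" by (rule pr)
  from ord obtain n where on: "order G = p ^ n" by blast
  from mc obtain N where nN: "N \<lhd> G" and cN: "cyclic_group (G\<lparr>carrier := N\<rparr>)"
    and cQ: "cyclic_group (G Mod N)" unfolding metacyclic_def by blast
  interpret Nn: normal N G by fact
  have sN: "subgroup N G" using nN normal_imp_subgroup by blast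
  
  have NC: "N \<subseteq> carrier G" using sN subgroup.subset by blast
  have HC: "H \<subseteq> carrier G" using sH subgroup.subset by blast
  have lag: "card (rcosets N) * card N = p ^ n" using lagrange[OF sN] on by simp
  have "card N dvd p ^ n" using lag by (metis dvd_triv_right)
  then obtain a where pN: "order (G\<lparr>carrier := N\<rparr>) = p ^ a"
    using divides_primepow_nat[OF pr] by (auto simp: order_def)
  have "card (rcosets N) dvd p ^ n" using lag by (metis dvd_triv_left)
  then obtain c where pQ: "order (G Mod N) = p ^ c"
    using divides_primepow_nat[OF pr] by (auto simp: order_def FactGroup_def)
  have groupN: "group (G\<lparr>carrier := N\<rparr>)" by (rule subgroup_imp_group[OF sN])
  have groupQ: "group (G Mod N)" by (rule Nn.factorgroup_is_group)
  have chainN: "(\<exists>k::int. u = v [^] k) \<or> (\<exists>k::int. v = u [^] k)" if "u \<in> N" "v \<in> N" for u v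
  proof -
    have "(\<exists>k::int. u = v [^]\<^bsub>G\<lparr>carrier := N\<rparr>\<^esub> k) \<or> (\<exists>k::int. v = u [^]\<^bsub>G\<lparr>carrier := N\<rparr>\<^esub> k)"
      using cyclic_chain[OF groupN cN pr pN] that by simp
    thus ?thesis using int_pow_consistent[OF sN] that by simp
  qed
  have commN: "u \<otimes> v = v \<otimes> u" if "u \<in> N" "v \<in> N" for u v
  proof -
    have "comm_group (G\<lparr>carrier := N\<rparr>)" using group.cyclic_imp_abelian_group[OF groupN cN] .
    hence "comm_monoid (G\<lparr>carrier := N\<rparr>)" by (rule comm_group.axioms(1))
    thus ?thesis using comm_monoid.m_comm[of "G\<lparr>carrier := N\<rparr>" u v] that by simp
  qed
  have cosQ: "N #> u \<in> carrier (G Mod N)" if "u \<in> carrier G" for u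
    using rcosetsI[OF NC that] by (simp add: FactGroup_def)
  have chainQ: "(\<exists>k::int. N #> u = N #> (v [^] k)) \<or> (\<exists>k::int. N #> v = N #> (u [^] k))"
    if "u \<in> carrier G" "v \<in> carrier G" for u v
    using cyclic_chain[OF groupQ cQ pr pQ cosQ[OF that(1)] cosQ[OF that(2)]]
      Nn.FactGroup_int_pow that by simp
  have cos: "\<exists>m\<in>N. u = m \<otimes> z" if "u \<in> carrier G" "z \<in> carrier G" "N #> u = N #> z" for u z
  proof -
    have "u \<in> N #> z" using rcos_self[OF that(1) sN] that(3) by simp
    thus ?thesis unfolding r_coset_def by auto
  qed
  have xG: "x \<in> carrier G" using xC by (simp add: centralizer_def)
  have xcomm: "x \<otimes> h = h \<otimes> x" if "h \<in> H" for h using xC that by (simp add: centralizer_def)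
  show "x \<in> H"
  proof (rule ccontr)
    assume xH: "x \<notin> H"
    have finH: "finite H" using HC fin finite_subset by blast
    have neH: "H \<noteq> {}" using subgroup.one_closed[OF sH] by blast
    define R where "R = (\<lambda>h h'. \<exists>k::int. N #> h = N #> (h' [^] k))"
    have trR: "\<forall>u\<in>H. \<forall>v\<in>H. \<forall>w\<in>H. R u v \<longrightarrow> R v w \<longrightarrow> R u w"
    proof (intro ballI impI)
      fix u v w assume uvw: "u \<in> H" "v \<in> H" "w \<in> H" and "R u v" "R v w"
      then obtain k l :: int where k: "N #> u = N #> (v [^] k)" and l: "N #> v = N #> (w [^] l)"
        unfolding R_def by blast
      have vG: "v \<in> carrier G" and wG: "w \<in> carrier G" using uvw HC by auto
      have "N #> (v [^] k) = (N #> v) [^]\<^bsub>G Mod N\<^esub> k" using Nn.FactGroup_int_pow[OF vG] by simp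
      also have "\<dots> = (N #> (w [^] l)) [^]\<^bsub>G Mod N\<^esub> k" using l by simp
      also have "\<dots> = N #> ((w [^] l) [^] k)" using Nn.FactGroup_int_pow wG by simp
      also have "\<dots> = N #> (w [^] (l * k))" using wG by (simp add: int_pow_pow)
      finally show "R u w" unfolding R_def using k by blast
    qed
    have totR: "\<forall>u\<in>H. \<forall>v\<in>H. R u v \<or> R v u"
      using chainQ HC unfolding R_def by blast
    obtain b where bH: "b \<in> H" and bmax: "\<forall>h\<in>H. R h b"
      using finite_total_max[OF finH neH trR totR] by blast
    have bG: "b \<in> carrier G" using bH HC by auto
    have dec: "\<exists>k::int. \<exists>m\<in>N \<inter> H. h = m \<otimes> b [^] k" if hH: "h \<in> H" for h
    proof -
      obtain k :: int where "N #> h = N #> (b [^] k)" using bmax hH unfolding R_def by blast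
      then obtain m where m: "m \<in> N" "h = m \<otimes> b [^] k" using cos hH HC bG by blast
      have mG: "m \<in> carrier G" using m NC by auto
      have "m = h \<otimes> inv (b [^] k)" using inv_solve_right mG hH HC bG m(2) by auto
      moreover have "h \<otimes> inv (b [^] k) \<in> H"
        using hH bH sH by (simp add: subgroup.m_closed subgroup.m_inv_closed subgroup_int_pow_closed)
      ultimately show ?thesis using m by blast
    qed
    have abel: "h1 \<otimes> h2 = h2 \<otimes> h1" if "h1 \<in> H" "h2 \<in> H" for h1 h2
    proof -
      consider (c1) k :: int where "N #> x = N #> (b [^] k)"
        | (c2) k :: int where "N #> b = N #> (x [^] k)"
        using chainQ[OF xG bG] by blast
      then show ?thesis
      proof cases
        case c1
        then obtain n0 where n0: "n0 \<in> N" "x = n0 \<otimes> b [^] k" using cos xG bG by blast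
        have n0G: "n0 \<in> carrier G" using n0 NC by auto
        have n0eq: "n0 = x \<otimes> inv (b [^] k)" using inv_solve_right n0G xG bG n0(2) by auto
        have sCb: "subgroup (centralizer G {b}) G" using centralizer_subgroup bG by simp
        have "x \<in> centralizer G {b}" using xG xcomm[OF bH] by (simp add: centralizer_def)
        moreover have "b \<in> centralizer G {b}" using bG by (simp add: centralizer_def)
        ultimately have "x \<otimes> inv (b [^] k) \<in> centralizer G {b}"
          using sCb by (simp add: subgroup.m_closed subgroup.m_inv_closed subgroup_int_pow_closed)
        hence n0b: "n0 \<otimes> b = b \<otimes> n0" using n0eq by (simp add: centralizer_def)
        show ?thesis
        proof (cases "\<exists>a\<in>N \<inter> H. \<exists>k'::int. n0 = a [^] k'")
          case True
          then obtain a' and k' :: int where "a' \<in> H" "n0 = a' [^] k'" by blast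
          hence "n0 \<in> H" using sH subgroup_int_pow_closed by blast
          hence "x \<in> H" using n0(2) bH sH
            by (simp add: subgroup.m_closed subgroup_int_pow_closed)
          with xH show ?thesis by blast
        next
          case False
          hence pw: "\<exists>k'::int. a' = n0 [^] k'" if "a' \<in> N \<inter> H" for a'
            using chainN[of a' n0] that n0(1) by blast
          define S where "S = {n0, b}"
          have SC: "S \<subseteq> carrier G" using n0G bG S_def by auto
          have Scomm: "s \<otimes> t = t \<otimes> s" if "s \<in> S" "t \<in> S" for s t
            using that n0b unfolding S_def by auto
          have sg: "subgroup (generate G S) G" using generate_is_subgroup[OF SC] .
          have n0g: "n0 \<in> generate G S" and bg: "b \<in> generate G S"
            using generate.incl[of _ S G] S_def by auto
          have Hg: "h \<in> generate G S" if hH: "h \<in> H" for h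
          proof -
            obtain j :: int and m where m: "m \<in> N \<inter> H" "h = m \<otimes> b [^] j" using dec[OF hH] by blast
            obtain k' :: int where "m = n0 [^] k'" using pw[OF m(1)] by blast
            thus ?thesis using m(2) sg n0g bg
              by (simp add: subgroup.m_closed subgroup_int_pow_closed)
          qed
          show ?thesis using commuting_generate[OF SC Scomm Hg Hg] that by blast
        qed
      next
        case c2
        then obtain n0 where n0: "n0 \<in> N" "b = n0 \<otimes> x [^] k" using cos xG bG by blast
        have n0G: "n0 \<in> carrier G" using n0 NC by auto
        have n0eq: "n0 = b \<otimes> inv (x [^] k)" using inv_solve_right n0G xG bG n0(2) by auto
        have sCx: "subgroup (centralizer G {x}) G" using centralizer_subgroup xG by simp
        have "b \<in> centralizer G {x}" using bG xcomm[OF bH] by (simp add: centralizer_def)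
        moreover have "x \<in> centralizer G {x}" using xG by (simp add: centralizer_def)
        ultimately have "b \<otimes> inv (x [^] k) \<in> centralizer G {x}"
          using sCx by (simp add: subgroup.m_closed subgroup.m_inv_closed subgroup_int_pow_closed)
        hence n0x: "n0 \<otimes> x = x \<otimes> n0" using n0eq by (simp add: centralizer_def)
        define S where "S = (N \<inter> H) \<union> {n0, x}"
        have SC: "S \<subseteq> carrier G" using n0G xG NC S_def by auto
        have Scomm: "s \<otimes> t = t \<otimes> s" if "s \<in> S" "t \<in> S" for s t
        proof -
          have "s \<in> N \<union> {x}" "t \<in> N \<union> {x}" using that n0(1) S_def by auto
          moreover have "s \<otimes> x = x \<otimes> s" if "s \<in> S" for s
            using that n0x xcomm unfolding S_def by auto
          ultimately show ?thesis using commN that by auto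
        qed
        have sg: "subgroup (generate G S) G" using generate_is_subgroup[OF SC] .
        have n0g: "n0 \<in> generate G S" and xg: "x \<in> generate G S"
          using generate.incl[of _ S G] S_def by auto
        have bg: "b \<in> generate G S" using n0(2) sg n0g xg
          by (simp add: subgroup.m_closed subgroup_int_pow_closed)
        have Hg: "h \<in> generate G S" if hH: "h \<in> H" for h
        proof -
          obtain j :: int and m where m: "m \<in> N \<inter> H" "h = m \<otimes> b [^] j" using dec[OF hH] by blast
          have "m \<in> generate G S" using m(1) generate.incl[of m S G] S_def by auto
          thus ?thesis using m(2) sg bg
            by (simp add: subgroup.m_closed subgroup_int_pow_closed)
        qed
        show ?thesis using commuting_generate[OF SC Scomm Hg Hg] that by blast
      qed
    qed
    have "comm_group (G\<lparr>carrier := H\<rparr>)"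
      by (rule group.group_comm_groupI[OF subgroup_imp_group[OF sH]]) (simp add: abel)
    with nc show False by blast
  qed
qed


theorem proposition6p7:
  fixes G :: "('a, 'b) monoid_scheme" and p :: nat
  assumes "Factorial_Ring.prime p"
    and "group G"
    and "finite (carrier G)"
    and "\<exists>n. order G = p ^ n"
    and "metacyclic G"
    and "subgroup H G"
    and "\<not> comm_group (G\<lparr>carrier := H\<rparr>)"
  shows "centralizer G H \<subseteq> H"
  using group.main_lemma[OF assms(2,1,3,4,5,6,7)] .

end
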